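(* Let $G=(V,E)$ be a graph with $n$ vertices, $m$ edges, maximum degree $\Delta$ and arboricity $\alpha$. Procedure Arboricity Edge-Coloring with parameter $h\le\log\alpha$ computes a proper $(\Delta+3\cdot2^h)$-edge-coloring of $G$ in $O\left(\frac{m\alpha^7\log n}{2^{7h}}\right)$ deterministic time. Its randomized version requires $O\left(\frac{m\alpha\log n}{2^h}\right)$ expected time.
   Context: Logarithms are base 2. The arboricity of $G$ is $\max_{S\subseteq V,|S|\ge2}\lceil |E(G[S])|/(|S|-1)\rceil$. A proper $k$-edge-coloring is a map $\varphi:E\to\{1,\dots,k\}$ with distinct colors on distinct edges sharing an endpoint. An oriented degree-splitting of $(H,\mu)$ with discrepancy $\kappa$ is a partition $(E_1,E_2)$ of $E(H)$ such that for every vertex $v$, the numbers of incoming edges of $v$ in $E_1$ and in $E_2$ differ by at most $\kappa$, and likewise for outgoing edges. Procedure Forests-Decomposition Orientation$(G)$: starting from $\mathcal A=V$, repeatedly pick $v\in\mathcal A$ of minimum degree in $G[\mathcal A]$, orient every edge from $v$ to its neighbours in $\mathcal A$, and remove $v$ from $\mathcal A$, until $\mathcal A=\emptyset$. Procedure Oriented Edge-Coloring$(H,\mu,h)$: if $h=0$, return a proper $(\Delta(H)+1)$-edge-coloring of $H$ computed by a base-case subroutine; otherwise compute in $O(|E(H)|)$ time an oriented degree-splitting $(E_1,E_2)$ of $(H,\mu)$ with discrepancy at most 1, let $H_1=(V,E_1)$, $H_2=(V,E_2)$ with orientation induced by $\mu$, compute $\varphi_1=$ Oriented Edge-Coloring$(H_1,\mu,h-1)$,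 $\varphi_2=$ Oriented Edge-Coloring$(H_2,\mu,h-1)$, and return $\varphi=\varphi_1$ on $E_1$ and $\varphi=p_1+\varphi_2$ on $E_2$, where $p_1$ is the palette size of $\varphi_1$. Procedure Arboricity Edge-Coloring$(G,h)$: compute $\mu=$ Forests-Decomposition Orientation$(G)$ and return Oriented Edge-Coloring$(G,\mu,h)$. Deterministic version: the base-case subroutine is a deterministic algorithm computing a proper $(\Delta'+1)$-edge-coloring of an $n'$-vertex $m'$-edge graph with maximum degree $\Delta'$ and arboricity $\alpha'$ in $O(m'\alpha'^7\log n')$ time. Randomized version: the base-case subroutine is a randomized algorithm computing a proper $(\Delta'+1)$-edge-coloring in expected $O(m'\alpha'\log n')$ time. *)

theory Defs
  imports Complex_Main
begin

definition graph :: "'a set \<Rightarrow> 'a set set \<Rightarrow> bool" where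
  "graph V E \<longleftrightarrow> finite V \<and> (\<forall>e\<in>E. e \<subseteq> V \<and> card e = 2)"

definition degree_in :: "'a set set \<Rightarrow> 'a \<Rightarrow> nat" where
  "degree_in E v = card {e\<in>E. v \<in> e}"

definition max_degree :: "'a set \<Rightarrow> 'a set set \<Rightarrow> nat" where
  "max_degree V E = Max (insert 0 (degree_in E ` V))"

definition induced_edges :: "'a set set \<Rightarrow> 'a set \<Rightarrow> 'a set set" where
  "induced_edges E S = {e\<in>E. e \<subseteq> S}"

definition arboricity :: "'a set \<Rightarrow> 'a set set \<Rightarrow> nat" where
  "arboricity V E = Max (insert 0 {nat \<lceil>real (card (induced_edges E S)) / real (card S - 1)\<rceil> | S. S \<subseteq> V \<and> card S \<ge> 2})"

definition proper_edge_coloring :: "'a set set \<Rightarrow> nat \<Rightarrow> ('a set \<Rightarrow> nat) \<Rightarrow> bool" where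
  "proper_edge_coloring E k \<phi> \<longleftrightarrow>
     (\<forall>e\<in>E. \<phi> e \<in> {1..k}) \<and>
     (\<forall>e\<in>E. \<forall>e'\<in>E. e \<noteq> e' \<and> e \<inter> e' \<noteq> {} \<longrightarrow> \<phi> e \<noteq> \<phi> e')"

(* An orientation is given by the tail of each edge: edge e is oriented from tail e
   to its other endpoint. *)
definition out_edges :: "'a set set \<Rightarrow> ('a set \<Rightarrow> 'a) \<Rightarrow> 'a \<Rightarrow> 'a set set" where
  "out_edges F tail v = {e\<in>F. tail e = v}"

definition in_edges :: "'a set set \<Rightarrow> ('a set \<Rightarrow> 'a) \<Rightarrow> 'a \<Rightarrow> 'a set set" where
  "in_edges F tail v = {e\<in>F. v \<in> e \<and> tail e \<noteq> v}"

definition oriented_degree_splitting ::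
  "'a set \<Rightarrow> 'a set set \<Rightarrow> ('a set \<Rightarrow> 'a) \<Rightarrow> nat \<Rightarrow> 'a set set \<Rightarrow> 'a set set \<Rightarrow> bool" where
  "oriented_degree_splitting V H tail \<kappa> E1 E2 \<longleftrightarrow>
     E1 \<union> E2 = H \<and> E1 \<inter> E2 = {} \<and>
     (\<forall>v\<in>V. \<bar>int (card (in_edges E1 tail v)) - int (card (in_edges E2 tail v))\<bar> \<le> int \<kappa> \<and>
            \<bar>int (card (out_edges E1 tail v)) - int (card (out_edges E2 tail v))\<bar> \<le> int \<kappa>)"

(* Possible outputs of Procedure Forests-Decomposition Orientation (any tie-breaking):
   vs is the order in which vertices are removed from \<A>; vs!i has minimum degree in
   G[set (drop i vs)]; each edge is oriented from the earlier-removed endpoint. *)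
definition forests_decomposition_orientation :: "'a set \<Rightarrow> 'a set set \<Rightarrow> ('a set \<Rightarrow> 'a) \<Rightarrow> bool" where
  "forests_decomposition_orientation V E tail \<longleftrightarrow>
     (\<exists>vs. distinct vs \<and> set vs = V \<and>
        (\<forall>i<length vs. \<forall>u\<in>set (drop i vs).
            degree_in (induced_edges E (set (drop i vs))) (vs ! i)
              \<le> degree_in (induced_edges E (set (drop i vs))) u) \<and>
        (\<forall>e\<in>E. \<forall>i<length vs. \<forall>j<length vs. e = {vs ! i, vs ! j} \<and> i < j \<longrightarrow> tail e = vs ! i))"

(* Runs of Procedure Oriented Edge-Coloring(H, tail, h) on vertex set V.
   oec_run C c k V tail H h \<phi> p cost: a possible run returns colouring \<phi> with palette size p,
   and cost is an upper bound on its running time, where the base-case subroutine costs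
   at most C * m' * \<alpha>'^k * log n' and the degree-splitting at most c * |E(H)|. *)
inductive oec_run :: "real \<Rightarrow> real \<Rightarrow> nat \<Rightarrow> 'a set \<Rightarrow> ('a set \<Rightarrow> 'a) \<Rightarrow> 'a set set \<Rightarrow> nat
     \<Rightarrow> ('a set \<Rightarrow> nat) \<Rightarrow> nat \<Rightarrow> real \<Rightarrow> bool"
  for C c :: real and k :: nat and V :: "'a set" and tail :: "'a set \<Rightarrow> 'a" where
  base: "proper_edge_coloring H (max_degree V H + 1) \<phi> \<Longrightarrow>
         cost \<le> C * real (card H) * real (arboricity V H) ^ k * log 2 (real (card V)) \<Longrightarrow>
         oec_run C c k V tail H 0 \<phi> (max_degree V H + 1) cost"
| step: "oriented_degree_splitting V H tail 1 E1 E2 \<Longrightarrow>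
         oec_run C c k V tail E1 h \<phi>1 p1 c1 \<Longrightarrow>
         oec_run C c k V tail E2 h \<phi>2 p2 c2 \<Longrightarrow>
         cost \<le> c * real (card H) + c1 + c2 \<Longrightarrow>
         oec_run C c k V tail H (Suc h) (\<lambda>e. if e \<in> E1 then \<phi>1 e else p1 + \<phi>2 e) (p1 + p2) cost"

(* Runs of Procedure Arboricity Edge-Coloring(G, h); orientation step costs at most c * m *)
definition arb_run :: "real \<Rightarrow> real \<Rightarrow> nat \<Rightarrow> 'a set \<Rightarrow> 'a set set \<Rightarrow> nat
     \<Rightarrow> ('a set \<Rightarrow> nat) \<Rightarrow> nat \<Rightarrow> real \<Rightarrow> bool" where
  "arb_run C c k V E h \<phi> p cost \<longleftrightarrow>
     (\<exists>tail cst. forests_decomposition_orientation V E tail \<and>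
        oec_run C c k V tail E h \<phi> p cst \<and> cost \<le> c * real (card E) + cst)"

end

theory Submission
  imports Defs
begin


definition gok :: "'a set \<Rightarrow> ('a set \<Rightarrow> 'a) \<Rightarrow> 'a set set \<Rightarrow> bool" where
  "gok V tail H \<longleftrightarrow> finite V \<and> (\<forall>e\<in>H. e \<subseteq> V \<and> card e = 2 \<and> tail e \<in> e)"

lemma gok_finite: "gok V tail H \<Longrightarrow> finite H"
  unfolding gok_def by (meson Pow_iff finite_Pow_iff rev_finite_subset subsetI)

lemma gok_sub: "gok V tail H \<Longrightarrow> E1 \<subseteq> H \<Longrightarrow> gok V tail E1"
  unfolding gok_def by blast

lemma split_basic:
  assumes "oriented_degree_splitting V H tail 1 E1 E2" "finite H"
  shows "E1 \<subseteq> H" "E2 \<subseteq> H" "card H = card E1 + card E2"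
proof -
  have a: "E1 \<union> E2 = H" "E1 \<inter> E2 = {}" using assms(1) unfolding oriented_degree_splitting_def by auto
  then show "E1 \<subseteq> H" "E2 \<subseteq> H" by auto
  show "card H = card E1 + card E2" using a assms(2)
    by (metis card_Un_disjoint finite_Un)
qed

lemma split_out:
  assumes "oriented_degree_splitting V H tail 1 E1 E2" "finite H" "v \<in> V"
  shows "real (card (out_edges E1 tail v)) \<le> (real (card (out_edges H tail v)) + 1) / 2"
        "real (card (out_edges E2 tail v)) \<le> (real (card (out_edges H tail v)) + 1) / 2"
        "real (card (in_edges E1 tail v)) \<le> (real (card (in_edges H tail v)) + 1) / 2"
        "real (card (in_edges E2 tail v)) \<le> (real (card (in_edges H tail v)) + 1) / 2"
proof -
  have a: "E1 \<union> E2 = H" "E1 \<inter> E2 = {}"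
    and d1: "\<bar>int (card (in_edges E1 tail v)) - int (card (in_edges E2 tail v))\<bar> \<le> 1"
    and d2: "\<bar>int (card (out_edges E1 tail v)) - int (card (out_edges E2 tail v))\<bar> \<le> 1"
    using assms unfolding oriented_degree_splitting_def by auto
  have f1: "finite E1" "finite E2" using a assms(2) by auto
  have o: "out_edges H tail v = out_edges E1 tail v \<union> out_edges E2 tail v"
     "out_edges E1 tail v \<inter> out_edges E2 tail v = {}"
    using a unfolding out_edges_def by auto
  have i: "in_edges H tail v = in_edges E1 tail v \<union> in_edges E2 tail v"
     "in_edges E1 tail v \<inter> in_edges E2 tail v = {}"
    using a unfolding in_edges_def by auto
  have co: "card (out_edges H tail v) = card (out_edges E1 tail v) + card (out_edges E2 tail v)"
    using o f1 unfolding out_edges_def by (simp add: card_Un_disjoint)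
  have ci: "card (in_edges H tail v) = card (in_edges E1 tail v) + card (in_edges E2 tail v)"
    using i f1 unfolding in_edges_def by (simp add: card_Un_disjoint)
  have d2': "card (out_edges E1 tail v) \<le> card (out_edges E2 tail v) + 1"
    "card (out_edges E2 tail v) \<le> card (out_edges E1 tail v) + 1" using d2 by (simp_all add: abs_le_iff)
  have d1': "card (in_edges E1 tail v) \<le> card (in_edges E2 tail v) + 1"
    "card (in_edges E2 tail v) \<le> card (in_edges E1 tail v) + 1" using d1 by (simp_all add: abs_le_iff)
  show "real (card (out_edges E1 tail v)) \<le> (real (card (out_edges H tail v)) + 1) / 2"
    using co d2' by simp
  show  "real (card (out_edges E2 tail v)) \<le> (real (card (out_edges H tail v)) + 1) / 2"
    using co d2' by simp
  show "real (card (in_edges E1 tail v)) \<le> (real (card (in_edges H tail v)) + 1) / 2"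
    using ci d1' by simp
  show "real (card (in_edges E2 tail v)) \<le> (real (card (in_edges H tail v)) + 1) / 2"
    using ci d1' by simp
qed


lemma degree_split:
  assumes "gok V tail H"
  shows "degree_in H v = card (in_edges H tail v) + card (out_edges H tail v)"
proof -
  have fin: "finite H" using assms gok_finite by blast
  have "{e\<in>H. v \<in> e} = in_edges H tail v \<union> out_edges H tail v"
    using assms unfolding gok_def in_edges_def out_edges_def by auto
  moreover have "in_edges H tail v \<inter> out_edges H tail v = {}"
    unfolding in_edges_def out_edges_def by auto
  ultimately show ?thesis unfolding degree_in_def using fin
    by (simp add: card_Un_disjoint in_edges_def out_edges_def)
qed

lemma max_degree_le:
  assumes "finite V" "0 \<le> T" "\<And>v. v \<in> V \<Longrightarrow> real (degree_in H v) \<le> T"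
  shows "real (max_degree V H) \<le> T"
proof -
  have "Max (insert 0 (degree_in H ` V)) \<in> insert 0 (degree_in H ` V)"
    using assms(1) by (intro Max_in) auto
  then show ?thesis unfolding max_degree_def using assms by auto
qed

lemma palette:
  assumes "oec_run C c k V tail H h \<phi> p cost"
  shows "gok V tail H \<Longrightarrow> 0 \<le> T \<Longrightarrow>
    (\<forall>v\<in>V. real (card (in_edges H tail v)) + real (card (out_edges H tail v)) \<le> T) \<Longrightarrow>
    proper_edge_coloring H p \<phi> \<and> real p \<le> T + 3 * 2 ^ h - 2"
  using assms
proof (induction arbitrary: T rule: oec_run.induct)
  case (base H \<phi> cost)
  have "real (max_degree V H) \<le> T"
    apply (rule max_degree_le)
    using base.prems base.hyps unfolding gok_def apply simp
     apply (simp add: base.prems)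
    using base.prems degree_split by fastforce
  then show ?case using base by simp
next
  case (step H E1 E2 h \<phi>1 p1 c1 \<phi>2 p2 c2 cost)
  have fin: "finite H" using step.prems gok_finite by blast
  note sb = split_basic[OF step.hyps(1) fin]
  note so = split_out[OF step.hyps(1) fin]
  have g1: "gok V tail E1" "gok V tail E2" using sb step.prems gok_sub by blast+
  have T1: "\<forall>v\<in>V. real (card (in_edges E1 tail v)) + real (card (out_edges E1 tail v)) \<le> T/2+1"
  proof
    fix v assume "v \<in> V"
    then show "real (card (in_edges E1 tail v)) + real (card (out_edges E1 tail v)) \<le> T/2+1"
      using so[OF \<open>v\<in>V\<close>] step.prems(3) \<open>v\<in>V\<close> by fastforce
  qed
  have T2: "\<forall>v\<in>V. real (card (in_edges E2 tail v)) + real (card (out_edges E2 tail v)) \<le> T/2+1"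
  proof
    fix v assume "v \<in> V"
    then show "real (card (in_edges E2 tail v)) + real (card (out_edges E2 tail v)) \<le> T/2+1"
      using so[OF \<open>v\<in>V\<close>] step.prems(3) \<open>v\<in>V\<close> by fastforce
  qed
  have I1: "proper_edge_coloring E1 p1 \<phi>1" "real p1 \<le> T/2+1 + 3 * 2 ^ h - 2"
    using step.IH(1)[OF g1(1) _ T1] step.prems by auto
  have I2: "proper_edge_coloring E2 p2 \<phi>2" "real p2 \<le> T/2+1 + 3 * 2 ^ h - 2"
    using step.IH(2)[OF g1(2) _ T2] step.prems by auto
  have HU: "H = E1 \<union> E2" "E1 \<inter> E2 = {}" using step.hyps(1) unfolding oriented_degree_splitting_def by auto
  have c1: "\<And>e. e \<in> E1 \<Longrightarrow> \<phi>1 e \<in> {1..p1}" using I1(1) unfolding proper_edge_coloring_def by blast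
  have c2: "\<And>e. e \<in> E2 \<Longrightarrow> \<phi>2 e \<in> {1..p2}" using I2(1) unfolding proper_edge_coloring_def by blast
  have d1: "\<And>e e'. e \<in> E1 \<Longrightarrow> e' \<in> E1 \<Longrightarrow> e \<noteq> e' \<Longrightarrow> e \<inter> e' \<noteq> {} \<Longrightarrow> \<phi>1 e \<noteq> \<phi>1 e'"
    using I1(1) unfolding proper_edge_coloring_def by blast
  have d2: "\<And>e e'. e \<in> E2 \<Longrightarrow> e' \<in> E2 \<Longrightarrow> e \<noteq> e' \<Longrightarrow> e \<inter> e' \<noteq> {} \<Longrightarrow> \<phi>2 e \<noteq> \<phi>2 e'"
    using I2(1) unfolding proper_edge_coloring_def by blast
  have pc: "proper_edge_coloring H (p1 + p2) (\<lambda>e. if e \<in> E1 then \<phi>1 e else p1 + \<phi>2 e)"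
    unfolding proper_edge_coloring_def
  proof (intro conjI ballI impI)
    fix e assume "e \<in> H"
    then show "(if e \<in> E1 then \<phi>1 e else p1 + \<phi>2 e) \<in> {1..p1 + p2}"
      using c1[of e] c2[of e] HU by (cases "e \<in> E1") auto
  next
    fix e e' assume a: "e \<in> H" "e' \<in> H" "e \<noteq> e' \<and> e \<inter> e' \<noteq> {}"
    show "(if e \<in> E1 then \<phi>1 e else p1 + \<phi>2 e) \<noteq> (if e' \<in> E1 then \<phi>1 e' else p1 + \<phi>2 e')"
    proof (cases "e \<in> E1"; cases "e' \<in> E1")
      assume "e \<in> E1" "e' \<in> E1" then show ?thesis using d1 a by auto
    next
      assume "e \<in> E1" "e' \<notin> E1" then show ?thesis using c1[of e] c2[of e'] a HU by auto
    next
      assume "e \<notin> E1" "e' \<in> E1" then show ?thesis using c1[of e'] c2[of e] a HU by auto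
    next
      assume "e \<notin> E1" "e' \<notin> E1" then show ?thesis using d2 a HU by auto
    qed
  qed
  then show ?case using I1(2) I2(2) by simp
qed


lemma arb_finite: "finite V \<Longrightarrow> finite {nat \<lceil>real (card (induced_edges E S)) / real (card S - 1)\<rceil> | S. S \<subseteq> V \<and> card S \<ge> 2}"
  by (rule finite_image_set) simp

lemma arb_leaf:
  assumes g: "gok V tail H" and B: "0 \<le> B" "\<forall>v\<in>V. real (card (out_edges H tail v)) \<le> B"
  shows "real (arboricity V H) \<le> 2 * B + 1"
proof -
  have fV: "finite V" using g unfolding gok_def by blast
  have fH: "finite H" using g gok_finite by blast
  have el: "real x \<le> 2 * B + 1" if xin: "x \<in> {nat \<lceil>real (card (induced_edges H S)) / real (card S - 1)\<rceil> | S. S \<subseteq> V \<and> card S \<ge> 2}" for x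
  proof -
    obtain S where S: "x = nat \<lceil>real (card (induced_edges H S)) / real (card S - 1)\<rceil>" "S \<subseteq> V" "card S \<ge> 2"
      using xin by blast
    have fS: "finite S" using S fV finite_subset by blast
    have sub: "induced_edges H S \<subseteq> (\<Union>v\<in>S. out_edges H tail v)"
      using g unfolding induced_edges_def out_edges_def gok_def by blast
    have "card (induced_edges H S) \<le> card (\<Union>v\<in>S. out_edges H tail v)"
      using fS fH sub by (intro card_mono) (auto simp: out_edges_def)
    also have "\<dots> \<le> (\<Sum>v\<in>S. card (out_edges H tail v))" by (rule card_UN_le[OF fS])
    finally have "real (card (induced_edges H S)) \<le> (\<Sum>v\<in>S. real (card (out_edges H tail v)))"
      by (metis of_nat_le_iff of_nat_sum)
    also have "\<dots> \<le> (\<Sum>v\<in>S. B)" by (rule sum_mono) (use B S in auto)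
    also have "\<dots> = B * real (card S)" by simp
    also have "\<dots> \<le> 2 * B * real (card S - 1)"
    proof -
      have s2: "2 \<le> real (card S)" using S(3) by simp
      have "0 \<le> B * (real (card S) - 2)" using B(1) s2 by simp
      then show ?thesis using S(3) by (simp add: of_nat_diff algebra_simps)
    qed
    finally have r: "real (card (induced_edges H S)) / real (card S - 1) \<le> 2 * B"
      using S(3) by (simp add: divide_le_eq)
    have "real x = real_of_int \<lceil>real (card (induced_edges H S)) / real (card S - 1)\<rceil>"
      unfolding S(1) by (simp add: S(3))
    also have "\<dots> \<le> 2 * B + 1" by (rule order_trans[OF of_int_ceiling_le_add_one add_right_mono[OF r]])
    finally show ?thesis .
  qed
  have "arboricity V H \<in> insert 0 {nat \<lceil>real (card (induced_edges H S)) / real (card S - 1)\<rceil> | S. S \<subseteq> V \<and> card S \<ge> 2}"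
    unfolding arboricity_def by (rule Max_in) (use arb_finite[OF fV] in auto)
  then show ?thesis using el B(1) by auto
qed


lemma gok_cardV: "gok V tail H \<Longrightarrow> H \<noteq> {} \<Longrightarrow> 2 \<le> card V"
  unfolding gok_def by (metis card_mono equals0I)

lemma cost_bound:
  assumes "oec_run C c k V tail H h \<phi> p cost"
  shows "gok V tail H \<Longrightarrow> 0 \<le> D \<Longrightarrow>
    (\<forall>v\<in>V. real (card (out_edges H tail v)) \<le> D) \<Longrightarrow>
    cost \<le> \<bar>c\<bar> * real h * real (card H)
       + \<bar>C\<bar> * real (card H) * (2 * ((D - 1) / 2 ^ h + 1) + 1) ^ k * log 2 (real (card V))"
  using assms
proof (induction arbitrary: D rule: oec_run.induct)
  case (base H \<phi> cost)
  show ?case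
  proof (cases "H = {}")
    case True
    then show ?thesis using base by simp
  next
    case False
    have "2 \<le> card V" using gok_cardV[OF base.prems(1) False] .
    then have L: "1 \<le> log 2 (real (card V))" by simp
    have a: "real (arboricity V H) \<le> 2 * D + 1" using arb_leaf[OF base.prems(1) base.prems(2,3)] .
    have "real (arboricity V H) ^ k \<le> (2 * D + 1) ^ k" using a by (simp add: power_mono)
    then have "real (card H) * real (arboricity V H) ^ k * log 2 (real (card V))
      \<le> real (card H) * (2 * D + 1) ^ k * log 2 (real (card V))"
      using L by (simp add: mult_left_mono mult_right_mono)
    then have "\<bar>C\<bar> * (real (card H) * real (arboricity V H) ^ k * log 2 (real (card V)))
      \<le> \<bar>C\<bar> * (real (card H) * (2 * D + 1) ^ k * log 2 (real (card V)))"
      by (simp add: mult_left_mono)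
    moreover have "C * (real (card H) * real (arboricity V H) ^ k * log 2 (real (card V)))
       \<le> \<bar>C\<bar> * (real (card H) * real (arboricity V H) ^ k * log 2 (real (card V)))"
      using L by (intro mult_right_mono) auto
    ultimately show ?thesis using base.hyps(2) by (simp add: mult.assoc)
  qed
next
  case (step H E1 E2 h \<phi>1 p1 c1 \<phi>2 p2 c2 cost)
  have fin: "finite H" using step.prems gok_finite by blast
  note sb = split_basic[OF step.hyps(1) fin]
  note so = split_out[OF step.hyps(1) fin]
  have g1: "gok V tail E1" "gok V tail E2" using sb step.prems gok_sub by blast+
  have O1: "0 \<le> (D + 1) / 2" using step.prems by simp
  have B1: "\<forall>v\<in>V. real (card (out_edges E1 tail v)) \<le> (D + 1) / 2"
    using so(1) step.prems(3) by fastforce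
  have B2: "\<forall>v\<in>V. real (card (out_edges E2 tail v)) \<le> (D + 1) / 2"
    using so(2) step.prems(3) by fastforce
  have eq: "((D + 1) / 2 - 1) / 2 ^ h = (D - 1) / 2 ^ Suc h" by (simp add: field_simps)
  define W where "W = (2 * ((D - 1) / 2 ^ Suc h + 1) + 1) ^ k * log 2 (real (card V))"
  have I1: "c1 \<le> \<bar>c\<bar> * real h * real (card E1) + \<bar>C\<bar> * real (card E1) * W"
    using step.IH(1)[OF g1(1) O1 B1] unfolding eq W_def by (simp add: mult.assoc)
  have I2: "c2 \<le> \<bar>c\<bar> * real h * real (card E2) + \<bar>C\<bar> * real (card E2) * W"
    using step.IH(2)[OF g1(2) O1 B2] unfolding eq W_def by (simp add: mult.assoc)
  have cH: "real (card H) = real (card E1) + real (card E2)" using sb(3) by simp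
  have "c * real (card H) \<le> \<bar>c\<bar> * real (card H)" by (intro mult_right_mono) auto
  then have "cost \<le> \<bar>c\<bar> * real (card H) + (\<bar>c\<bar> * real h * real (card E1) + \<bar>C\<bar> * real (card E1) * W)
     + (\<bar>c\<bar> * real h * real (card E2) + \<bar>C\<bar> * real (card E2) * W)"
    using step.hyps(4) I1 I2 by linarith
  also have "\<dots> = \<bar>c\<bar> * real (Suc h) * real (card H) + \<bar>C\<bar> * real (card H) * W"
    unfolding cH of_nat_Suc by algebra
  finally have "cost \<le> \<bar>c\<bar> * real (Suc h) * real (card H) + \<bar>C\<bar> * real (card H) * W" .
  then show ?case unfolding W_def by (simp add: mult.assoc)
qed


lemma handshake:
  assumes "finite S" "finite F" "\<forall>e\<in>F. e \<subseteq> S \<and> card e = 2"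
  shows "(\<Sum>u\<in>S. degree_in F u) = 2 * card F"
proof -
  have dg: "degree_in F u = (\<Sum>e\<in>F. if u \<in> e then 1 else 0)" for u
  proof -
    have "degree_in F u = (\<Sum>e\<in>{e\<in>F. u \<in> e}. 1)" unfolding degree_in_def by simp
    also have "\<dots> = (\<Sum>e\<in>F. if u \<in> e then 1 else 0)" by (rule sum.inter_filter[OF assms(2)])
    finally show ?thesis .
  qed
  have "(\<Sum>u\<in>S. degree_in F u) = (\<Sum>u\<in>S. \<Sum>e\<in>F. if u \<in> e then 1 else 0)"
    using dg by simp
  also have "\<dots> = (\<Sum>e\<in>F. \<Sum>u\<in>S. if u \<in> e then 1 else 0)" by (rule sum.swap)
  also have "\<dots> = (\<Sum>e\<in>F. 2)"
  proof (rule sum.cong[OF refl])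
    fix e assume "e \<in> F"
    then have es: "e \<subseteq> S" "card e = 2" using assms(3) by auto
    have "(\<Sum>u\<in>S. if u \<in> e then 1 else 0 :: nat) = (\<Sum>u\<in>{u\<in>S. u \<in> e}. 1)"
      by (rule sum.inter_filter[OF assms(1), symmetric])
    also have "{u\<in>S. u \<in> e} = e" using es by auto
    finally show "(\<Sum>u\<in>S. if u \<in> e then 1 else 0 :: nat) = 2" using es by simp
  qed
  finally show ?thesis by simp
qed

lemma arb_finiteV: "graph V E \<Longrightarrow> finite V" unfolding graph_def by blast

lemma arb_lower:
  assumes "graph V E" "S \<subseteq> V" "2 \<le> card S"
  shows "real (card (induced_edges E S)) \<le> real (arboricity V E) * real (card S - 1)"
proof -
  let ?x = "nat \<lceil>real (card (induced_edges E S)) / real (card S - 1)\<rceil>"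
  have fV: "finite V" using assms(1) arb_finiteV by blast
  have "?x \<le> arboricity V E" unfolding arboricity_def
  proof (rule Max_ge)
    show "finite (insert 0 {nat \<lceil>real (card (induced_edges E S)) / real (card S - 1)\<rceil> | S. S \<subseteq> V \<and> card S \<ge> 2})"
      using arb_finite[OF fV] by blast
    have "?x \<in> {nat \<lceil>real (card (induced_edges E S)) / real (card S - 1)\<rceil> | S. S \<subseteq> V \<and> card S \<ge> 2}"
      using assms(2,3) by blast
    then show "?x \<in> insert 0 {nat \<lceil>real (card (induced_edges E S)) / real (card S - 1)\<rceil> | S. S \<subseteq> V \<and> card S \<ge> 2}"
      by blast
  qed
  then have "real (card (induced_edges E S)) / real (card S - 1) \<le> real (arboricity V E)"
  proof -
    have "real (card (induced_edges E S)) / real (card S - 1) \<le> real_of_int \<lceil>real (card (induced_edges E S)) / real (card S - 1)\<rceil>"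
      by (rule le_of_int_ceiling)
    also have "\<dots> = real ?x" by simp
    also have "\<dots> \<le> real (arboricity V E)" using \<open>?x \<le> arboricity V E\<close> by (rule of_nat_mono)
    finally show ?thesis .
  qed
  then show ?thesis using assms(3) by (simp add: divide_le_eq)
qed



lemma edge_idx:
  assumes "graph V E" "set vs = V" "e \<in> E"
  shows "\<exists>a b. a < b \<and> b < length vs \<and> e = {vs ! a, vs ! b}"
proof -
  have "e \<subseteq> V" "card e = 2" using assms unfolding graph_def by auto
  then obtain x y where xy: "e = {x, y}" "x \<noteq> y" by (meson card_2_iff)
  have "x \<in> set vs" "y \<in> set vs" using xy \<open>e \<subseteq> V\<close> assms(2) by auto
  then obtain i j where ij: "i < length vs" "vs ! i = x" "j < length vs" "vs ! j = y"
    by (meson in_set_conv_nth)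
  have "i \<noteq> j" using ij xy by auto
  show ?thesis
  proof (cases "i < j")
    case True then show ?thesis using ij xy by blast
  next
    case False
    then have "j < i" using \<open>i \<noteq> j\<close> by simp
    then show ?thesis using ij xy by (metis insert_commute)
  qed
qed

lemma fdo_gok:
  assumes g: "graph V E" and f: "forests_decomposition_orientation V E tail"
  shows "gok V tail E"
proof -
  obtain vs where vs: "distinct vs" "set vs = V"
    "\<forall>e\<in>E. \<forall>i<length vs. \<forall>j<length vs. e = {vs ! i, vs ! j} \<and> i < j \<longrightarrow> tail e = vs ! i"
    using f unfolding forests_decomposition_orientation_def by blast
  have "tail e \<in> e" if eE: "e \<in> E" for e
  proof -
    obtain a b where ab: "a < b" "b < length vs" "e = {vs ! a, vs ! b}"
      using edge_idx[OF g vs(2) eE] by blast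
    then have "tail e = vs ! a" using vs(3) eE by auto
    then show ?thesis using ab by simp
  qed
  then show ?thesis using g unfolding gok_def graph_def by blast
qed

lemma fdo_out:
  assumes g: "graph V E" and f: "forests_decomposition_orientation V E tail" and v: "v \<in> V"
  shows "real (card (out_edges E tail v)) \<le> 2 * real (arboricity V E)"
proof -
  obtain vs where vs: "distinct vs" "set vs = V"
    "\<forall>i<length vs. \<forall>u\<in>set (drop i vs).
            degree_in (induced_edges E (set (drop i vs))) (vs ! i)
              \<le> degree_in (induced_edges E (set (drop i vs))) u"
    "\<forall>e\<in>E. \<forall>i<length vs. \<forall>j<length vs. e = {vs ! i, vs ! j} \<and> i < j \<longrightarrow> tail e = vs ! i"
    using f unfolding forests_decomposition_orientation_def by blast
  have gk: "gok V tail E" using fdo_gok[OF g f] .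
  have fE: "finite E" using gok_finite[OF gk] .
  have fV: "finite V" using g unfolding graph_def by blast
  obtain i where i: "i < length vs" "vs ! i = v" using v vs(2) by (meson in_set_conv_nth)
  define S where "S = set (drop i vs)"
  define ES where "ES = induced_edges E S"
  have inS: "vs ! k \<in> S" if "i \<le> k" "k < length vs" for k
  proof -
    have "drop i vs ! (k - i) = vs ! k" using that by simp
    moreover have "k - i < length (drop i vs)" using that by simp
    ultimately show ?thesis unfolding S_def by (metis nth_mem)
  qed
  have vS: "v \<in> S" using inS[of i] i by simp
  have SV: "S \<subseteq> V" unfolding S_def using vs(2) by (meson set_drop_subset)
  have fS: "finite S" using SV fV finite_subset by blast
  have fES: "finite ES" unfolding ES_def induced_edges_def using fE by simp
  have sub: "out_edges E tail v \<subseteq> {e\<in>ES. v \<in> e}"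
  proof
    fix e assume e: "e \<in> out_edges E tail v"
    then have eE: "e \<in> E" and te: "tail e = v" unfolding out_edges_def by auto
    obtain a b where ab: "a < b" "b < length vs" "e = {vs ! a, vs ! b}"
      using edge_idx[OF g vs(2) eE] by blast
    have "tail e = vs ! a" using vs(4) eE ab by auto
    then have "vs ! a = vs ! i" using te i by simp
    then have "a = i" using nth_eq_iff_index_eq[OF vs(1), of a i] ab i by simp
    then have "e \<subseteq> S" using ab inS by auto
    moreover have "v \<in> e" using gk eE te unfolding gok_def by blast
    ultimately show "e \<in> {e\<in>ES. v \<in> e}" using eE unfolding ES_def induced_edges_def by simp
  qed
  have "card (out_edges E tail v) \<le> degree_in ES v"
    unfolding degree_in_def using fES sub by (intro card_mono) auto
  moreover have mindeg: "\<forall>u\<in>S. degree_in ES v \<le> degree_in ES u"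
    using vs(3) i unfolding ES_def S_def by blast
  have ESok: "\<forall>e\<in>ES. e \<subseteq> S \<and> card e = 2"
    using g unfolding ES_def induced_edges_def graph_def by blast
  have "real (degree_in ES v) \<le> 2 * real (arboricity V E)"
  proof (cases "2 \<le> card S")
    case True
    have "card S * degree_in ES v \<le> (\<Sum>u\<in>S. degree_in ES u)"
      using sum_mono[of S "\<lambda>_. degree_in ES v" "degree_in ES", OF mindeg[rule_format]] by simp
    also have "\<dots> = 2 * card ES" using handshake[OF fS fES ESok] .
    finally have "real (card S) * real (degree_in ES v) \<le> 2 * real (card ES)"
      by (metis of_nat_le_iff of_nat_mult of_nat_numeral)
    also have "\<dots> \<le> 2 * (real (arboricity V E) * real (card S - 1))"
      using arb_lower[OF g SV True] unfolding ES_def by simp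
    also have "\<dots> \<le> 2 * (real (arboricity V E) * real (card S))" by (intro mult_left_mono) auto
    finally have "real (card S) * real (degree_in ES v) \<le> real (card S) * (2 * real (arboricity V E))"
      by (simp add: algebra_simps)
    then show ?thesis using True by simp
  next
    case False
    have "ES = {}"
    proof (rule ccontr)
      assume "ES \<noteq> {}"
      then obtain e where "e \<in> ES" by blast
      then have "e \<subseteq> S" "card e = 2" using ESok by auto
      then have "2 \<le> card S" using fS by (metis card_mono)
      then show False using False by simp
    qed
    then show ?thesis unfolding degree_in_def by simp
  qed
  ultimately show ?thesis by linarith
qed


lemma cardE_le: assumes "graph V E" shows "card E \<le> card V ^ 2"
proof -
  have fV: "finite V" using assms unfolding graph_def by blast
  have "E \<subseteq> {B. B \<subseteq> V \<and> card B = 2}" using assms unfolding graph_def by blast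
  then have "card E \<le> card {B. B \<subseteq> V \<and> card B = 2}" by (intro card_mono) (use fV in auto)
  also have "\<dots> = card V choose 2" using n_subsets[OF fV] .
  also have "\<dots> \<le> card V ^ 2"
  proof (cases "2 \<le> card V")
    case True then show ?thesis by (rule binomial_le_pow)
  next
    case False then show ?thesis by (simp add: binomial_eq_0)
  qed
  finally show ?thesis .
qed

lemma arb_le_cardE: assumes "graph V E" shows "arboricity V E \<le> card E"
proof -
  have fV: "finite V" using assms unfolding graph_def by blast
  have fE: "finite E" using assms fV unfolding graph_def
    by (meson Pow_iff finite_Pow_iff rev_finite_subset subsetI)
  have el: "x \<le> card E" if xin: "x \<in> {nat \<lceil>real (card (induced_edges E S)) / real (card S - 1)\<rceil> | S. S \<subseteq> V \<and> card S \<ge> 2}" for x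
  proof -
    obtain S where S: "x = nat \<lceil>real (card (induced_edges E S)) / real (card S - 1)\<rceil>" "card S \<ge> 2"
      using xin by blast
    have "card (induced_edges E S) \<le> card E" unfolding induced_edges_def using fE by (intro card_mono) auto
    have "real (card (induced_edges E S)) / real (card S - 1) \<le> real (card (induced_edges E S))"
    proof -
      have s1: "1 \<le> real (card S - 1)" using S(2) by simp
      have "real (card (induced_edges E S)) * 1 \<le> real (card (induced_edges E S)) * real (card S - 1)"
        by (rule mult_left_mono[OF s1]) simp
      then show ?thesis using s1 by (simp add: divide_le_eq)
    qed
    also have "\<dots> \<le> real (card E)" using \<open>card (induced_edges E S) \<le> card E\<close> by simp
    finally have r: "real (card (induced_edges E S)) / real (card S - 1) \<le> real (card E)" .
    have "\<lceil>real (card (induced_edges E S)) / real (card S - 1)\<rceil> \<le> int (card E)"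
      by (rule ceiling_le) (use r in simp)
    then show ?thesis unfolding S(1) by (metis nat_int nat_mono)
  qed
  show ?thesis unfolding arboricity_def
    by (rule Max.boundedI) (use arb_finite[OF fV] el in auto)
qed

lemma arb_pos: assumes "graph V E" "e \<in> E" shows "1 \<le> arboricity V E"
proof -
  have e: "e \<subseteq> V" "card e = 2" using assms unfolding graph_def by auto
  have fe: "finite e" using e(2) card.infinite by fastforce
  have "e \<in> induced_edges E e" using assms unfolding induced_edges_def by simp
  have fE: "finite E" using assms(1) unfolding graph_def
    by (meson Pow_iff finite_Pow_iff rev_finite_subset subsetI)
  have "finite (induced_edges E e)" using fE unfolding induced_edges_def by simp
  then have "1 \<le> card (induced_edges E e)"
    using \<open>e \<in> induced_edges E e\<close> by (metis One_nat_def Suc_leI card_gt_0_iff empty_iff)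
  then have "1 \<le> real (arboricity V E) * real (card e - 1)"
    using arb_lower[OF assms(1) e(1)] e(2) by (smt (verit) of_nat_1 of_nat_le_iff)
  then show ?thesis using e(2) by simp
qed

lemma proper_mono: "proper_edge_coloring H p \<phi> \<Longrightarrow> p \<le> q \<Longrightarrow> proper_edge_coloring H q \<phi>"
  unfolding proper_edge_coloring_def by auto



lemma main_k:
  assumes g: "graph V E" and hl: "real h \<le> log 2 (real (arboricity V E))"
    and run: "arb_run C c k V E h \<phi> p cost" and K: "3 * \<bar>c\<bar> + 7 ^ k * \<bar>C\<bar> \<le> K"
  shows "proper_edge_coloring E (max_degree V E + 3 * 2 ^ h) \<phi> \<and>
         cost \<le> K * real (card E) * real (arboricity V E) ^ k * log 2 (real (card V)) / 2 ^ (k * h)"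
proof -
  obtain tail cst where fdo: "forests_decomposition_orientation V E tail"
    and oec: "oec_run C c k V tail E h \<phi> p cst" and cc: "cost \<le> c * real (card E) + cst"
    using run unfolding arb_run_def by blast
  have gk: "gok V tail E" using fdo_gok[OF g fdo] .
  have fV: "finite V" using g unfolding graph_def by blast
  have fE: "finite E" using gok_finite[OF gk] .
  let ?\<Delta> = "max_degree V E"
  have dle: "real (card (in_edges E tail v)) + real (card (out_edges E tail v)) \<le> real ?\<Delta>" if "v \<in> V" for v
  proof -
    have "degree_in E v \<le> ?\<Delta>" unfolding max_degree_def
      by (rule Max_ge) (use fV that in auto)
    then show ?thesis using degree_split[OF gk, of v] by simp
  qed
  have pal: "proper_edge_coloring E p \<phi> \<and> real p \<le> real ?\<Delta> + 3 * 2 ^ h - 2"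
    using palette[OF oec gk, of "real ?\<Delta>"] dle by simp
  then have "real p \<le> real (?\<Delta> + 3 * 2 ^ h)" by simp
  then have "p \<le> ?\<Delta> + 3 * 2 ^ h" by (simp only: of_nat_le_iff)
  then have col: "proper_edge_coloring E (?\<Delta> + 3 * 2 ^ h) \<phi>" using pal proper_mono by blast
  let ?a = "real (arboricity V E)"
  let ?L = "log 2 (real (card V))"
  let ?m = "real (card E)"
  let ?X = "2 * ((2 * ?a - 1) / 2 ^ h + 1) + 1"
  have cb: "cst \<le> \<bar>c\<bar> * real h * ?m + \<bar>C\<bar> * ?m * ?X ^ k * ?L"
    using cost_bound[OF oec gk, of "2 * ?a"] fdo_out[OF g fdo] by simp
  have cbound: "cost \<le> K * ?m * ?a ^ k * ?L / 2 ^ (k * h)"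
  proof (cases "E = {}")
    case True
    then show ?thesis using cc cb by simp
  next
    case False
    then obtain e where "e \<in> E" by blast
    have a1: "1 \<le> ?a" using arb_pos[OF g \<open>e \<in> E\<close>] by simp
    have n2: "2 \<le> card V" using gok_cardV[OF gk False] .
    then have L1: "1 \<le> ?L" by simp
    have "2 powr real h \<le> ?a" using hl a1 by (subst (asm) le_log_iff) auto
    then have ha: "2 ^ h \<le> ?a" by (simp add: powr_realpow)
    define Q where "Q = ?a / 2 ^ h"
    have Q1: "1 \<le> Q" unfolding Q_def using ha by simp
    have X0: "0 \<le> ?X" using a1 by simp
    have "(2 * ?a - 1) / 2 ^ h \<le> 2 * Q" unfolding Q_def by (simp add: divide_right_mono)
    moreover have "2 * (r + 1) + 1 \<le> 7 * Q" if rq: "r \<le> 2 * Q" for r using Q1 rq by argo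
    ultimately have "?X \<le> 7 * Q" by blast
    then have Xk: "?X ^ k \<le> 7 ^ k * Q ^ k" using X0 by (metis power_mono power_mult_distrib)
    have "?a \<le> real (card V) ^ 2"
      using arb_le_cardE[OF g] cardE_le[OF g] by (metis of_nat_le_iff of_nat_power order_trans)
    then have "log 2 ?a \<le> log 2 (real (card V) ^ 2)" using a1 by (intro log_mono) auto
    also have "\<dots> = 2 * ?L" using n2 by (simp add: log_nat_power)
    finally have h3: "real h + 1 \<le> 3 * ?L" using hl L1 by linarith
    have Qk: "1 \<le> Q ^ k" using Q1 by simp
    have m0: "0 \<le> ?m" by simp
    have "cost \<le> \<bar>c\<bar> * (real h + 1) * ?m + \<bar>C\<bar> * ?m * ?X ^ k * ?L"
    proof -
      have "c * ?m \<le> \<bar>c\<bar> * ?m" using m0 by (intro mult_right_mono) auto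
      then have "cost \<le> \<bar>c\<bar> * ?m + (\<bar>c\<bar> * real h * ?m + \<bar>C\<bar> * ?m * ?X ^ k * ?L)"
        using cc cb by linarith
      also have "\<dots> = \<bar>c\<bar> * (real h + 1) * ?m + \<bar>C\<bar> * ?m * ?X ^ k * ?L"
        by (simp add: algebra_simps)
      finally show ?thesis .
    qed
    also have "\<bar>c\<bar> * (real h + 1) * ?m \<le> \<bar>c\<bar> * (3 * ?L) * ?m"
      using h3 by (intro mult_right_mono mult_left_mono) auto
    also have "\<dots> \<le> \<bar>c\<bar> * (3 * ?L) * ?m * Q ^ k"
    proof -
      have nn: "0 \<le> \<bar>c\<bar> * (3 * ?L) * ?m" using L1 by simp
      show ?thesis using mult_left_mono[OF Qk nn] by simp
    qed
    also have "\<bar>C\<bar> * ?m * ?X ^ k * ?L \<le> \<bar>C\<bar> * ?m * (7 ^ k * Q ^ k) * ?L"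
      using Xk L1 by (intro mult_right_mono mult_left_mono) auto
    finally have "cost \<le> (3 * \<bar>c\<bar> + 7 ^ k * \<bar>C\<bar>) * (?m * Q ^ k * ?L)"
      by (simp add: algebra_simps)
    also have "\<dots> \<le> K * (?m * Q ^ k * ?L)" using K L1 Qk by (intro mult_right_mono) auto
    also have "\<dots> = K * ?m * ?a ^ k * ?L / 2 ^ (k * h)"
      unfolding Q_def by (simp add: power_divide power_mult mult.commute)
    finally show ?thesis .
  qed
  show ?thesis using col cbound by blast
qed


theorem theorem4p15:
  fixes C c :: real
  shows "\<exists>K::real. \<forall>(V::'a set) E h \<phi> p cost.
     graph V E \<longrightarrow> real h \<le> log 2 (real (arboricity V E)) \<longrightarrow>
     (arb_run C c 7 V E h \<phi> p cost \<longrightarrow>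
        proper_edge_coloring E (max_degree V E + 3 * 2 ^ h) \<phi> \<and>
        cost \<le> K * real (card E) * real (arboricity V E) ^ 7 * log 2 (real (card V)) / 2 ^ (7 * h)) \<and>
     (arb_run C c 1 V E h \<phi> p cost \<longrightarrow>
        proper_edge_coloring E (max_degree V E + 3 * 2 ^ h) \<phi> \<and>
        cost \<le> K * real (card E) * real (arboricity V E) * log 2 (real (card V)) / 2 ^ h)"
proof (intro exI allI impI conjI)
  define K where "K = 3 * \<bar>c\<bar> + 7 ^ 7 * \<bar>C\<bar>"
  have K7: "3 * \<bar>c\<bar> + 7 ^ 7 * \<bar>C\<bar> \<le> K" unfolding K_def by simp
  have K1: "3 * \<bar>c\<bar> + 7 ^ 1 * \<bar>C\<bar> \<le> K" unfolding K_def by simp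
  fix V :: "'a set" and E h \<phi> p cost
  assume g: "graph V E" and hl: "real h \<le> log 2 (real (arboricity V E))"
  {
    assume r: "arb_run C c 7 V E h \<phi> p cost"
    note M = main_k[OF g hl r K7]
    show "proper_edge_coloring E (max_degree V E + 3 * 2 ^ h) \<phi>" using M by blast
    show "cost \<le> K * real (card E) * real (arboricity V E) ^ 7 * log 2 (real (card V)) / 2 ^ (7 * h)"
      using M by blast
  next
    assume r: "arb_run C c 1 V E h \<phi> p cost"
    note M = main_k[OF g hl r K1]
    show "proper_edge_coloring E (max_degree V E + 3 * 2 ^ h) \<phi>" using M by blast
    show "cost \<le> K * real (card E) * real (arboricity V E) * log 2 (real (card V)) / 2 ^ h"
      using M by simp
  }
qed

end
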